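(* Let $A_1,\ldots,A_n$ be events in a probability space, let $X$ be the number of these events that occur, and for $1\le j\le n$ let $S_j=\sum_{1\le i_1<\cdots<i_j\le n}P(A_{i_1}\cdots A_{i_j})$. Let $r,k$ be integers with $1\le r\le k<n$. If $r+k$ is odd, then $$P(X\ge r)\ge\sum_{j=r}^{k}(-1)^{r+j}\binom{j-1}{r-1}S_j+\sum_{i=1}^{r}\binom{k-i}{r-i}\frac{\binom{k+1}{i}}{\binom{n}{i}}S_{k+1},$$ and if $r+k$ is even, then $$P(X\ge r)\le\sum_{j=r}^{k}(-1)^{r+j}\binom{j-1}{r-1}S_j-\sum_{i=1}^{r}\binom{k-i}{r-i}\frac{\binom{k+1}{i}}{\binom{n}{i}}S_{k+1}.$$
   Context: Binomial convention: for integers $s,t$, $\binom{t}{s}=0$ if $\min(s,t)<0$ or $s>t$; otherwise $\binom{t}{s}=\frac{t!}{s!(t-s)!}$. $A_{i_1}\cdots A_{i_j}$ denotes the intersection of the events. *)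

theory Defs
  imports "HOL-Probability.Probability"
begin

definition num_occ :: "(nat \<Rightarrow> 'a set) \<Rightarrow> nat \<Rightarrow> 'a \<Rightarrow> nat" where
  "num_occ A n w = card {i \<in> {1..n}. w \<in> A i}"

definition S_sum :: "'a measure \<Rightarrow> (nat \<Rightarrow> 'a set) \<Rightarrow> nat \<Rightarrow> nat \<Rightarrow> real" where
  "S_sum M A n j = (\<Sum>I\<in>{I. I \<subseteq> {1..n} \<and> card I = j}. measure M (\<Inter>i\<in>I. A i))"

end

theory Submission
  imports Defs
begin

definition G :: "nat \<Rightarrow> nat \<Rightarrow> nat \<Rightarrow> nat" where
  "G p q s = (\<Sum>u\<le>p. ((q+u) choose u) * ((s+u) choose (q+1+u)))"

lemma G_Suc: "G (Suc p) q s = G p q s + ((q+Suc p) choose Suc p) * ((s+Suc p) choose (q+1+Suc p))"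
  by (simp only: G_def sum.atMost_Suc)

lemma G_rec: "G p (Suc q) s + G p q s = ((p+q+1) choose p) * ((p+1+s) choose (p+q+2))"
proof (induction p)
  case 0
  then show ?case by (simp add: G_def)
next
  case (Suc p)
  define a where "a = ((p+q+1) choose p)"
  define b where "b = ((p+q+1) choose (p+1))"
  define x where "x = ((s+p+1) choose (q+p+2))"
  define y where "y = ((s+p+1) choose (q+p+3))"
  have pas1: "((Suc p+q+1) choose (Suc p)) = a + b"
    unfolding a_def b_def by (metis Suc_eq_plus1 add_Suc binomial_Suc_Suc)
  have pas2: "((Suc p+1+s) choose (Suc p+q+2)) = x + y"
  proof -
    have eq1: "Suc p+1+s = Suc (s+p+1)" and eq2: "Suc p+q+2 = Suc (q+p+2)" and eq3: "q+p+3 = Suc (q+p+2)" by simp_all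
    show ?thesis unfolding x_def y_def eq1 eq2 eq3 by (rule binomial_Suc_Suc)
  qed
  have f1: "Suc q+Suc p = Suc p+q+1" "q+Suc p = p+q+1" "Suc p = p+1" "s+Suc p = s+p+1"
     "Suc q+1+Suc p = q+p+3" "q+1+Suc p = q+p+2" "p+1+s = s+p+1" "p+q+2 = q+p+2" by simp_all
  have h1: "((Suc q+Suc p) choose Suc p) = a + b" using pas1 unfolding f1(1) .
  have h2: "((q+Suc p) choose Suc p) = b" unfolding b_def f1(2) by (simp only: Suc_eq_plus1)
  have h3: "((s+Suc p) choose (Suc q+1+Suc p)) = y" unfolding y_def f1(4) f1(5) ..
  have h4: "((s+Suc p) choose (q+1+Suc p)) = x" unfolding x_def f1(4) f1(6) ..
  have h5: "((p+q+1) choose p) * ((p+1+s) choose (p+q+2)) = a * x" unfolding a_def x_def f1(7) f1(8) ..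
  have "G (Suc p) (Suc q) s + G (Suc p) q s = (G p (Suc q) s + G p q s) + (a+b)*y + b*x"
    unfolding G_Suc h1 h2 h3 h4 by simp
  also have "... = a*x + (a+b)*y + b*x" by (simp only: Suc.IH h5)
  also have "... = (a+b)*(x+y)" by (simp only: distrib_left distrib_right add_ac)
  finally show ?case unfolding pas1 pas2 .
qed

lemma base_id: "((p+1+s) choose (p+1)) = 1 + (\<Sum>u\<le>p. (s+u) choose (u+1))"
proof (induction p)
  case 0 then show ?case by simp
next
  case (Suc p)
  have e: "(Suc p+1+s) choose (Suc p+1) = ((p+1+s) choose (p+1)) + ((s+Suc p) choose (Suc p+1))"
  proof -
    have "Suc p+1+s = Suc (p+1+s)" "Suc p + 1 = Suc (p+1)" "s + Suc p = p+1+s" by simp_all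
    then show ?thesis by (simp only: binomial_Suc_Suc)
  qed
  show ?case unfolding e Suc.IH sum.atMost_Suc by (simp only: add.assoc)
qed

lemma main_id: "(\<Sum>t\<le>q. (-1::int)^t * int ((p+t) choose p) * int ((p+1+s) choose (p+1+t)))
   = 1 + (-1)^q * int (G p q s)"
proof (induction q)
  case 0
  show ?case using base_id[of p s] by (simp add: G_def add_ac)
next
  case (Suc q)
  define a where "a = int ((p+q+1) choose p) * int ((p+1+s) choose (p+q+2))"
  have r: "int (G p (Suc q) s) = a - int (G p q s)"
    using G_rec[of p q s] unfolding a_def by (metis add_diff_cancel_right' of_nat_add of_nat_mult)
  have f: "p + Suc q = p+q+1" "p+1+Suc q = p+q+2" by simp_all
  have "(\<Sum>t\<le>Suc q. (-1::int)^t * int ((p+t) choose p) * int ((p+1+s) choose (p+1+t)))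
     = (\<Sum>t\<le>q. (-1::int)^t * int ((p+t) choose p) * int ((p+1+s) choose (p+1+t))) + (-1)^(Suc q) * a"
    unfolding a_def by (simp only: sum.atMost_Suc f mult.assoc)
  also have "... = 1 + (-1)^q * int (G p q s) + (-1)^(Suc q) * a" unfolding Suc.IH ..
  also have "... = 1 + (-1)^(Suc q) * int (G p (Suc q) s)" unfolding r by (simp add: algebra_simps)
  finally show ?case .
qed
lemma F_id:
  assumes "r = p+1" "k = p+1+q" "m = p+1+s"
  shows "(\<Sum>j=r..k. (-1::real)^(r+j) * real ((j-1) choose (r-1)) * real (m choose j))
    = 1 + (-1)^q * real (G p q s)"
proof -
  have "(\<Sum>j=r..k. (-1::real)^(r+j) * real ((j-1) choose (r-1)) * real (m choose j))
     = (\<Sum>t\<le>q. (-1::real)^(r+(r+t)) * real ((r+t-1) choose (r-1)) * real (m choose (r+t)))"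
    by (rule sum.reindex_bij_witness[where i="\<lambda>t. r+t" and j="\<lambda>j. j-r"]) (use assms in auto)
  also have "... = (\<Sum>t\<le>q. real_of_int ((-1::int)^t * int ((p+t) choose p) * int ((p+1+s) choose (p+1+t))))"
  proof (rule sum.cong)
    fix t assume "t \<in> {..q}"
    have e1: "r+(r+t) = t + 2*r" "r+t-1 = p+t" "r-1 = p" "m = p+1+s" "r+t = p+1+t" using assms by simp_all
    have "(-1::real)^(r+(r+t)) = (-1)^t" unfolding e1(1) by (simp only: power_add power_mult) simp
    then show "(-1::real)^(r+(r+t)) * real ((r+t-1) choose (r-1)) * real (m choose (r+t))
       = real_of_int ((-1::int)^t * int ((p+t) choose p) * int ((p+1+s) choose (p+1+t)))"
      unfolding e1(2-5) by simp
  qed simp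
  also have "... = real_of_int (\<Sum>t\<le>q. (-1::int)^t * int ((p+t) choose p) * int ((p+1+s) choose (p+1+t)))"
    by (simp only: of_int_sum)
  also have "... = 1 + (-1)^q * real (G p q s)" unfolding main_id by simp
  finally show ?thesis .
qed

lemma term_eq:
  assumes "i \<le> k+1" "k+1 \<le> m"
  shows "real ((k+1) choose i) * real (m choose (k+1)) / real (m choose i) = real ((m-i) choose (k+1-i))"
proof -
  have "(m choose (k+1)) * ((k+1) choose i) = (m choose i) * ((m-i) choose (k+1-i))"
    using choose_mult[OF assms] .
  then have "real (m choose (k+1)) * real ((k+1) choose i) = real (m choose i) * real ((m-i) choose (k+1-i))"
    by (metis of_nat_mult)
  moreover have "real (m choose i) > 0" using assms by simp
  ultimately show ?thesis by (simp add: field_simps)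
qed

lemma core:
  assumes "r = p+1" "k = p+1+q" "m = p+1+s" "k < m" "m \<le> n"
  shows "(\<Sum>i=1..r. real((k-i) choose (r-i)) * real((k+1) choose i) / real(n choose i))
           * real(m choose (k+1)) \<le> real (G p q s)"
proof -
  have "(\<Sum>i=1..r. real((k-i) choose (r-i)) * real((k+1) choose i) / real(n choose i)) * real(m choose (k+1))
     = (\<Sum>i=1..r. real((k-i) choose (r-i)) * (real((k+1) choose i) * real(m choose (k+1)) / real(n choose i)))"
    by (simp add: sum_distrib_right mult.assoc)
  also have "... \<le> (\<Sum>i=1..r. real((k-i) choose (r-i)) * (real((k+1) choose i) * real(m choose (k+1)) / real(m choose i)))"
  proof (rule sum_mono)
    fix i assume i: "i \<in> {1..r}"
    have "m choose i \<le> n choose i" using assms binomial_right_mono by simp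
    then have le: "real (m choose i) \<le> real (n choose i)" by linarith
    have "i \<le> m" using i assms by simp
    then have pos: "real (m choose i) > 0" by simp
    have "i \<le> n" using i assms by simp
    with le pos have "real((k+1) choose i) * real(m choose (k+1)) / real(n choose i)
        \<le> real((k+1) choose i) * real(m choose (k+1)) / real(m choose i)"
      by (intro divide_left_mono) (auto intro: mult_pos_pos)
    then show "real((k-i) choose (r-i)) * (real((k+1) choose i) * real(m choose (k+1)) / real(n choose i))
        \<le> real((k-i) choose (r-i)) * (real((k+1) choose i) * real(m choose (k+1)) / real(m choose i))"
      by (intro mult_left_mono) auto
  qed
  also have "... = (\<Sum>i=1..r. real((k-i) choose (r-i)) * real((m-i) choose (k+1-i)))"
  proof (rule sum.cong)
    fix i assume i: "i \<in> {1..r}"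
    have "i \<le> k+1" "k+1 \<le> m" using i assms by auto
    then show "real((k-i) choose (r-i)) * (real((k+1) choose i) * real(m choose (k+1)) / real(m choose i))
       = real((k-i) choose (r-i)) * real((m-i) choose (k+1-i))"
      using term_eq[of i k m] by simp
  qed simp
  also have "... = (\<Sum>u\<le>p. real((k-(r-u)) choose (r-(r-u))) * real((m-(r-u)) choose (k+1-(r-u))))"
    by (rule sum.reindex_bij_witness[where i="\<lambda>u. r-u" and j="\<lambda>i. r-i"]) (use assms in auto)
  also have "... = (\<Sum>u\<le>p. real ((q+u) choose u) * real ((s+u) choose (q+1+u)))"
  proof (rule sum.cong)
    fix u assume u: "u \<in> {..p}"
    then have e: "k-(r-u) = q+u" "r-(r-u) = u" "m-(r-u) = s+u" "k+1-(r-u) = q+1+u"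
      using assms by auto
    show "real((k-(r-u)) choose (r-(r-u))) * real((m-(r-u)) choose (k+1-(r-u)))
       = real ((q+u) choose u) * real ((s+u) choose (q+1+u))" unfolding e ..
  qed simp
  also have "... = real (G p q s)" by (simp add: G_def)
  finally show ?thesis .
qed

lemma pointwise:
  fixes m n r k :: nat
  assumes "1 \<le> r" "r \<le> k" "k < n" "m \<le> n"
  shows "(odd (r + k) \<longrightarrow> of_bool (r \<le> m) \<ge>
             (\<Sum>j=r..k. (-1) ^ (r + j) * real ((j - 1) choose (r - 1)) * real (m choose j))
             + (\<Sum>i=1..r. real ((k - i) choose (r - i)) * real ((k + 1) choose i) / real (n choose i))
               * real (m choose (k + 1)))
       \<and> (even (r + k) \<longrightarrow> of_bool (r \<le> m) \<le>
             (\<Sum>j=r..k. (-1) ^ (r + j) * real ((j - 1) choose (r - 1)) * real (m choose j))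
             - (\<Sum>i=1..r. real ((k - i) choose (r - i)) * real ((k + 1) choose i) / real (n choose i))
               * real (m choose (k + 1)))"
proof (cases "r \<le> m")
  case False
  then have S0: "(\<Sum>j=r..k. (-1) ^ (r + j) * real ((j - 1) choose (r - 1)) * real (m choose j)) = 0"
    by (intro sum.neutral) auto
  have z: "real (m choose (k+1)) = 0" using False assms by simp
  show ?thesis unfolding S0 z using False by simp
next
  case True
  define p q s where "p = r - 1" and "q = k - r" and "s = m - r"
  have rr: "r = p+1" "k = p+1+q" "m = p+1+s" using assms True by (auto simp: p_def q_def s_def)
  define c where "c = (\<Sum>i=1..r. real ((k - i) choose (r - i)) * real ((k + 1) choose i) / real (n choose i))"
  have F: "(\<Sum>j=r..k. (-1) ^ (r + j) * real ((j - 1) choose (r - 1)) * real (m choose j)) = 1 + (-1)^q * real (G p q s)"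
    by (rule F_id[OF rr])
  have cle: "c * real (m choose (k+1)) \<le> real (G p q s)"
  proof (cases "k < m")
    case True
    show ?thesis unfolding c_def by (rule core[OF rr True assms(4)])
  next
    case False
    then have z: "real (m choose (k+1)) = 0" by simp
    show ?thesis unfolding z by simp
  qed
  have par: "odd (r+k) \<longleftrightarrow> odd q" using rr by auto
  show ?thesis
  proof (intro conjI impI)
    assume "odd (r+k)"
    then have "(-1::real)^q = -1" using par by simp
    then show "of_bool (r \<le> m) \<ge>
             (\<Sum>j=r..k. (-1) ^ (r + j) * real ((j - 1) choose (r - 1)) * real (m choose j))
             + (\<Sum>i=1..r. real ((k - i) choose (r - i)) * real ((k + 1) choose i) / real (n choose i))
               * real (m choose (k + 1))"
      unfolding F c_def[symmetric] using cle True by simp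
  next
    assume "even (r+k)"
    then have "(-1::real)^q = 1" using par by simp
    then show "of_bool (r \<le> m) \<le>
             (\<Sum>j=r..k. (-1) ^ (r + j) * real ((j - 1) choose (r - 1)) * real (m choose j))
             - (\<Sum>i=1..r. real ((k - i) choose (r - i)) * real ((k + 1) choose i) / real (n choose i))
               * real (m choose (k + 1))"
      unfolding F c_def[symmetric] using cle True by simp
  qed
qed

theorem theorem3:
  fixes M :: "'a measure" and A :: "nat \<Rightarrow> 'a set" and n r k :: nat
  assumes "prob_space M"
    and "\<And>i. i \<in> {1..n} \<Longrightarrow> A i \<in> sets M"
    and "1 \<le> r" and "r \<le> k" and "k < n"
  shows "(odd (r + k) \<longrightarrow>
           measure M {w \<in> space M. num_occ A n w \<ge> r} \<ge>
             (\<Sum>j=r..k. (-1) ^ (r + j) * real ((j - 1) choose (r - 1)) * S_sum M A n j)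
             + (\<Sum>i=1..r. real ((k - i) choose (r - i)) * real ((k + 1) choose i) / real (n choose i))
               * S_sum M A n (k + 1))
       \<and> (even (r + k) \<longrightarrow>
           measure M {w \<in> space M. num_occ A n w \<ge> r} \<le>
             (\<Sum>j=r..k. (-1) ^ (r + j) * real ((j - 1) choose (r - 1)) * S_sum M A n j)
             - (\<Sum>i=1..r. real ((k - i) choose (r - i)) * real ((k + 1) choose i) / real (n choose i))
               * S_sum M A n (k + 1))"
proof -
  interpret prob_space M by (rule assms(1))
  define X where "X w = num_occ A n w" for w
  have Xc: "X w = card {i. i \<in> {1..n} \<and> w \<in> A i}" for w
    unfolding X_def num_occ_def by simp
  have Xmeas: "X \<in> measurable M (count_space UNIV)"
  proof -
    have cm: "(\<lambda>w. card {i. i \<in> {1..n} \<and> w \<in> A i}) \<in> measurable M (count_space UNIV)"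
    proof (rule measurable_card)
      fix i
      show "{x \<in> space M. i \<in> {i. i \<in> {1..n} \<and> x \<in> A i}} \<in> sets M"
      proof (cases "i \<in> {1..n}")
        case True
        then have "{x \<in> space M. i \<in> {i. i \<in> {1..n} \<and> x \<in> A i}} = space M \<inter> A i" by auto
        then show ?thesis using assms(2)[OF True] by auto
      next
        case False
        then have "{x \<in> space M. i \<in> {i. i \<in> {1..n} \<and> x \<in> A i}} = {}" by auto
        then show ?thesis by (simp only: sets.empty_sets)
      qed
    qed
    have "X = (\<lambda>w. card {i. i \<in> {1..n} \<and> w \<in> A i})" using Xc by (rule ext)
    with cm show ?thesis by (simp only:)
  qed
  have Xle: "X w \<le> n" for w
  proof -
    have "card {i. i \<in> {1..n} \<and> w \<in> A i} \<le> card {1..n}" by (rule card_mono) auto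
    then show ?thesis unfolding Xc by simp
  qed
  have fmeas: "(\<lambda>w. f (X w)) \<in> borel_measurable M" for f :: "nat \<Rightarrow> real"
    by (rule measurable_compose[OF Xmeas borel_measurable_count_space])
  have fint: "integrable M (\<lambda>w. f (X w))" for f :: "nat \<Rightarrow> real"
  proof (rule integrable_const_bound[where B="\<Sum>m\<le>n. \<bar>f m\<bar>"])
    show "AE x in M. norm (f (X x)) \<le> (\<Sum>m\<le>n. \<bar>f m\<bar>)"
    proof (rule AE_I2)
      fix x
      have "\<bar>f (X x)\<bar> \<le> (\<Sum>m\<le>n. \<bar>f m\<bar>)"
        by (rule member_le_sum) (use Xle in auto)
      then show "norm (f (X x)) \<le> (\<Sum>m\<le>n. \<bar>f m\<bar>)" by simp
    qed
  qed (rule fmeas)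
  have S_eq: "S_sum M A n j = (\<integral>w. real (X w choose j) \<partial>M)" if j: "1 \<le> j" for j
  proof -
    define II where "II = {I. I \<subseteq> {1..n} \<and> card I = j}"
    have finII: "finite II" unfolding II_def by (rule finite_subset[of _ "Pow {1..n}"]) auto
    have setsI: "(\<Inter>i\<in>I. A i) \<in> sets M" if "I \<in> II" for I
    proof -
      have "I \<noteq> {}" using that j unfolding II_def by auto
      moreover have "finite I" using that unfolding II_def by (auto intro: finite_subset)
      ultimately show ?thesis using that assms(2) unfolding II_def
        by (intro sets.finite_INT) auto
    qed
    have "S_sum M A n j = (\<Sum>I\<in>II. \<integral>w. indicator (\<Inter>i\<in>I. A i) w \<partial>M)"
      unfolding S_sum_def II_def[symmetric]
    proof (rule sum.cong)
      fix I assume "I \<in> II"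
      then have "(\<Inter>i\<in>I. A i) \<inter> space M = (\<Inter>i\<in>I. A i)" using setsI sets.sets_into_space by blast
      then show "measure M (\<Inter>i\<in>I. A i) = (\<integral>w. indicator (\<Inter>i\<in>I. A i) w \<partial>M)"
        by simp
    qed simp
    also have "... = (\<integral>w. (\<Sum>I\<in>II. indicator (\<Inter>i\<in>I. A i) w) \<partial>M)"
    proof -
      have "integrable M (indicator (\<Inter>i\<in>I. A i) :: 'a \<Rightarrow> real)" if "I \<in> II" for I
        using setsI[OF that] by (intro integrable_real_indicator) (auto simp: emeasure_eq_measure)
      then show ?thesis
        using Bochner_Integration.integral_sum[where I=II and M=M and f="\<lambda>I. indicator (\<Inter>i\<in>I. A i) :: 'a \<Rightarrow> real"] by simp
    qed
    also have "... = (\<integral>w. real (X w choose j) \<partial>M)"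
    proof (rule Bochner_Integration.integral_cong[OF refl])
      fix w
      define B where "B = {i. i \<in> {1..n} \<and> w \<in> A i}"
      have finB: "finite B" unfolding B_def by auto
      have "(\<Sum>I\<in>II. indicator (\<Inter>i\<in>I. A i) w :: real) = (\<Sum>I\<in>II. of_bool (w \<in> (\<Inter>i\<in>I. A i)))"
        by (simp add: indicator_def)
      also have "... = real (card (II \<inter> {I. w \<in> (\<Inter>i\<in>I. A i)}))"
        by (rule sum_of_bool_eq[OF finII finII])
      also have "II \<inter> {I. w \<in> (\<Inter>i\<in>I. A i)} = {I. I \<subseteq> B \<and> card I = j}"
        unfolding II_def B_def by auto
      also have "card {I. I \<subseteq> B \<and> card I = j} = card B choose j"
        using n_subsets[OF finB] by simp
      finally show "(\<Sum>I\<in>II. indicator (\<Inter>i\<in>I. A i) w :: real) = real (X w choose j)"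
        unfolding Xc B_def by simp
    qed
    finally show ?thesis .
  qed
  define c where "c = (\<Sum>i=1..r. real ((k - i) choose (r - i)) * real ((k + 1) choose i) / real (n choose i))"
  define F where "F m = (\<Sum>j=r..k. (-1) ^ (r + j) * real ((j - 1) choose (r - 1)) * real (m choose j))" for m
  have Pr: "measure M {w \<in> space M. num_occ A n w \<ge> r} = (\<integral>w. of_bool (r \<le> X w) \<partial>M)"
  proof -
    have "measure M {w \<in> space M. num_occ A n w \<ge> r} = (\<integral>w. indicator {w \<in> space M. num_occ A n w \<ge> r} w \<partial>M)"
      by (simp add: Int_absorb2)
    also have "... = (\<integral>w. of_bool (r \<le> X w) \<partial>M)"
      by (intro Bochner_Integration.integral_cong) (auto simp: indicator_def X_def)
    finally show ?thesis .
  qed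
  have Sk: "S_sum M A n (k+1) = (\<integral>w. real (X w choose (k+1)) \<partial>M)" by (rule S_eq) simp
  have SF: "(\<Sum>j=r..k. (-1) ^ (r + j) * real ((j - 1) choose (r - 1)) * S_sum M A n j) = (\<integral>w. F (X w) \<partial>M)"
  proof -
    have "(\<Sum>j=r..k. (-1) ^ (r + j) * real ((j - 1) choose (r - 1)) * S_sum M A n j)
       = (\<Sum>j=r..k. (\<integral>w. (-1) ^ (r + j) * real ((j - 1) choose (r - 1)) * real (X w choose j) \<partial>M))"
    proof (rule sum.cong)
      fix j assume "j \<in> {r..k}"
      then have "1 \<le> j" using assms by auto
      then show "(-1) ^ (r + j) * real ((j - 1) choose (r - 1)) * S_sum M A n j
         = (\<integral>w. (-1) ^ (r + j) * real ((j - 1) choose (r - 1)) * real (X w choose j) \<partial>M)"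
        using S_eq by simp
    qed simp
    also have "... = (\<integral>w. F (X w) \<partial>M)"
      unfolding F_def by (rule Bochner_Integration.integral_sum[symmetric]) (rule fint)
    finally show ?thesis .
  qed
  have I1: "(\<integral>w. F (X w) \<partial>M) + c * S_sum M A n (k+1) = (\<integral>w. F (X w) + c * real (X w choose (k+1)) \<partial>M)"
    unfolding Sk using fint[of F] fint[of "\<lambda>m. c * real (m choose (k+1))"] by simp
  have I2: "(\<integral>w. F (X w) \<partial>M) - c * S_sum M A n (k+1) = (\<integral>w. F (X w) - c * real (X w choose (k+1)) \<partial>M)"
    unfolding Sk using fint[of F] fint[of "\<lambda>m. c * real (m choose (k+1))"] by simp
  show ?thesis
  proof (intro conjI impI)
    assume odd: "odd (r+k)"
    have "(\<integral>w. F (X w) + c * real (X w choose (k+1)) \<partial>M) \<le> (\<integral>w. of_bool (r \<le> X w) \<partial>M)"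
    proof (rule integral_mono)
      fix w
      show "F (X w) + c * real (X w choose (k+1)) \<le> of_bool (r \<le> X w)"
        using pointwise[OF assms(3-5) Xle[of w]] odd unfolding F_def c_def by simp
    qed (use fint[of "\<lambda>m. F m + c * real (m choose (k+1))"] fint[of "\<lambda>m. of_bool (r \<le> m)"] in auto)
    then show "measure M {w \<in> space M. num_occ A n w \<ge> r} \<ge>
             (\<Sum>j=r..k. (-1) ^ (r + j) * real ((j - 1) choose (r - 1)) * S_sum M A n j)
             + (\<Sum>i=1..r. real ((k - i) choose (r - i)) * real ((k + 1) choose i) / real (n choose i))
               * S_sum M A n (k + 1)"
      unfolding Pr SF c_def[symmetric] I1 .
  next
    assume ev: "even (r+k)"
    have "(\<integral>w. of_bool (r \<le> X w) \<partial>M) \<le> (\<integral>w. F (X w) - c * real (X w choose (k+1)) \<partial>M)"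
    proof (rule integral_mono)
      fix w
      show "of_bool (r \<le> X w) \<le> F (X w) - c * real (X w choose (k+1))"
        using pointwise[OF assms(3-5) Xle[of w]] ev unfolding F_def c_def by simp
    qed (use fint[of "\<lambda>m. F m - c * real (m choose (k+1))"] fint[of "\<lambda>m. of_bool (r \<le> m)"] in auto)
    then show "measure M {w \<in> space M. num_occ A n w \<ge> r} \<le>
             (\<Sum>j=r..k. (-1) ^ (r + j) * real ((j - 1) choose (r - 1)) * S_sum M A n j)
             - (\<Sum>i=1..r. real ((k - i) choose (r - i)) * real ((k + 1) choose i) / real (n choose i))
               * S_sum M A n (k + 1)"
      unfolding Pr SF c_def[symmetric] I2 .
  qed
qed

end
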